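(* Let $X$ be a compact topological space and $(\mathcal{B},\mathcal{B}',\langle\cdot,\cdot\rangle,k)$ an RKBS with kernel on $X$ such that: $\{k(x,\cdot):x\in X\}$ is linearly independent; $\mathcal{B}$ has the universal property; the map $x\mapsto k(x,\cdot)\in\mathcal{B}'$ is continuous. Let $(\varphi_t)_{t\ge0}$ be a semiflow on $X$ (so $X$ is positively invariant) such that $(t,x)\mapsto\varphi_t(x)$ is continuous. For $T>0$ and $x\in X$ let $b'_{T,x}:=\int_0^T k(\varphi_s(x),\cdot)\,ds\in\mathcal{B}'$. Then $b'_{T,x}\in D(C)$ for all $T>0$, $x\in X$, where $C$ is the generator of the Perron–Frobenius semigroup. In particular, $C$ is densely defined.
   Context: RKBS with kernel on $X$: $(\mathcal{B},\mathcal{B}',\langle\cdot,\cdot\rangle,k)$, $\mathcal{B},\mathcal{B}'$ Banach spaces of functions on $X$ (pointwise operations), continuous point evaluations on $\mathcal{B}$, $\langle\cdot,\cdot\rangle:\mathcal{B}\times\mathcal{B}'\to\mathbb{C}$ continuous bilinear, $k(x,\cdot)\in\mathcal{B}'$ with $g(x)=\langle g,k(x,\cdot)\rangle$ for all $g\in\mathcal{B}$, $x\in X$. Universal property: $\mathcal{B}\subset\mathcal{C}(X)$ is dense in $\mathcal{C}(X)$ for the sup norm. Semiflow: $\varphi_t:X\to X$, $\varphi_0=\mathrm{id}$, $\varphi_{t+s}=\varphi_t\circ\varphi_s$. Perron–Frobenius semigroup: $K_t$ is the linear extension of $k(x,\cdot)\mapsto k(\varphi_t(x),\cdot)$ on $\mathrm{Span}\{k(x,\cdot):x\in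 X\}$, further extended to $D:=\{\int_Xk(y,\cdot)\,d\mu(y):\mu\in M(X)\}$ ($M(X)$ the finite signed Borel measures, integrals as Bochner integrals in $\mathcal{B}'$) by $\bar K_t\big(\int_Xk(y,\cdot)\,d\mu(y)\big):=\int_Xk(\varphi_t(y),\cdot)\,d\mu(y)$ (this is well defined under the stated assumptions); note $b'_{T,x}\in D$ with $\mu$ the measure $\int g\,d\mu=\int_0^Tg(\varphi_s(x))\,ds$. The generator $C$ is $Cg:=\lim_{t\searrow0}\frac1t(\bar K_tg-g)$ (limit in $\mathcal{B}'$), with $D(C)$ the set of $g\in D$ for which this limit exists. Densely defined means w.r.t. $\langle\cdot,\cdot\rangle$: $g\in\mathcal{B}$ and $\langle g,h\rangle=0$ for all $h\in D(C)$ imply $g=0$. *)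

theory Defs
  imports "HOL-Analysis.Analysis"
begin

text \<open>Bochner integral for functions with values in an arbitrary (not necessarily separable)
  real Banach space: the library's has_bochner_integral requires second countability,
  so we give the standard definition (a.e. limit of simple integrable functions with
  L1-convergence) directly.\<close>
definition bochner_int :: "'x measure \<Rightarrow> ('x \<Rightarrow> 'v::banach) \<Rightarrow> 'v \<Rightarrow> bool" where
  "bochner_int M f v \<longleftrightarrow> (\<exists>s. (\<forall>i. Bochner_Integration.simple_bochner_integrable M (s i))
      \<and> (AE y in M. (\<lambda>i. s i y) \<longlonglongrightarrow> f y)
      \<and> (\<lambda>i. \<integral>\<^sup>+y. ennreal (norm (f y - s i y)) \<partial>M) \<longlonglongrightarrow> 0
      \<and> (\<lambda>i. Bochner_Integration.simple_bochner_integral M (s i)) \<longlonglongrightarrow> v)"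

text \<open>A (real) Banach space type 'v realised, via an injective map ev, as a space of
  complex-valued functions on 'a with pointwise operations, closed under complex scalar
  multiplication with absolutely homogeneous norm, i.e. a complex Banach space of functions.\<close>
definition complex_fun_space :: "('v::banach \<Rightarrow> 'a \<Rightarrow> complex) \<Rightarrow> bool" where
  "complex_fun_space ev \<longleftrightarrow> inj ev
     \<and> (\<forall>v w. ev (v + w) = (\<lambda>x. ev v x + ev w x))
     \<and> (\<forall>r v. ev (r *\<^sub>R v) = (\<lambda>x. complex_of_real r * ev v x))
     \<and> (\<forall>v z. \<exists>w. ev w = (\<lambda>x. z * ev v x) \<and> norm w = cmod z * norm v)"

text \<open>RKBS with kernel: B (type 'b, realisation ev), B' (type 'c, realisation ev'),
  pairing p, and kernel x \<mapsto> k(x,.) given as kern x \<in> B' (so k(x,y) = ev' (kern x) y).\<close>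
definition rkbs :: "('b::banach \<Rightarrow> 'a \<Rightarrow> complex) \<Rightarrow> ('c::banach \<Rightarrow> 'a \<Rightarrow> complex)
    \<Rightarrow> ('b \<Rightarrow> 'c \<Rightarrow> complex) \<Rightarrow> ('a \<Rightarrow> 'c) \<Rightarrow> bool" where
  "rkbs ev ev' p kern \<longleftrightarrow>
     complex_fun_space ev \<and> complex_fun_space ev'
     \<and> (\<forall>x. \<exists>c. \<forall>g. cmod (ev g x) \<le> c * norm g)
     \<and> (\<forall>g1 g2 h. p (g1 + g2) h = p g1 h + p g2 h)
     \<and> (\<forall>g h1 h2. p g (h1 + h2) = p g h1 + p g h2)
     \<and> (\<forall>g g' h z. ev g' = (\<lambda>x. z * ev g x) \<longrightarrow> p g' h = z * p g h)
     \<and> (\<forall>g h h' z. ev' h' = (\<lambda>x. z * ev' h x) \<longrightarrow> p g h' = z * p g h)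
     \<and> (\<exists>M. \<forall>g h. cmod (p g h) \<le> M * norm g * norm h)
     \<and> (\<forall>g x. ev g x = p g (kern x))"

definition kernel_lin_indep :: "('c \<Rightarrow> 'a \<Rightarrow> complex) \<Rightarrow> ('a \<Rightarrow> 'c) \<Rightarrow> bool" where
  "kernel_lin_indep ev' kern \<longleftrightarrow>
     (\<forall>F c. finite F \<longrightarrow> (\<forall>y. (\<Sum>x\<in>F. c x * ev' (kern x) y) = 0) \<longrightarrow> (\<forall>x\<in>F. c x = 0))"

definition universal :: "('b \<Rightarrow> 'a::topological_space \<Rightarrow> complex) \<Rightarrow> bool" where
  "universal ev \<longleftrightarrow> (\<forall>g. continuous_on UNIV (ev g))
     \<and> (\<forall>f. continuous_on UNIV f \<longrightarrow> (\<forall>\<epsilon>>0. \<exists>g. \<forall>x. cmod (ev g x - f x) < \<epsilon>))"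

definition semiflow :: "(real \<Rightarrow> 'a \<Rightarrow> 'a) \<Rightarrow> bool" where
  "semiflow \<phi> \<longleftrightarrow> \<phi> 0 = id \<and> (\<forall>t s. t \<ge> 0 \<longrightarrow> s \<ge> 0 \<longrightarrow> \<phi> (t + s) = \<phi> t \<circ> \<phi> s)"

text \<open>Finite (positive) Borel measures on 'a; finite signed measures are represented as
  differences M1 - M2 of two of them (Jordan decomposition).\<close>
definition fin_borel :: "'a::topological_space measure \<Rightarrow> bool" where
  "fin_borel M \<longleftrightarrow> sets M = sets (borel :: 'a measure) \<and> finite_measure M"

definition Dom :: "('a::topological_space \<Rightarrow> 'c::banach) \<Rightarrow> 'c set" where
  "Dom kern = {h. \<exists>M1 M2 v1 v2. fin_borel M1 \<and> fin_borel M2 \<and>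
      bochner_int M1 kern v1 \<and> bochner_int M2 kern v2 \<and> h = v1 - v2}"

definition Kbar :: "('a::topological_space \<Rightarrow> 'c::banach) \<Rightarrow> (real \<Rightarrow> 'a \<Rightarrow> 'a) \<Rightarrow> real \<Rightarrow> 'c \<Rightarrow> 'c" where
  "Kbar kern \<phi> t g = (THE h. \<exists>M1 M2 v1 v2 w1 w2. fin_borel M1 \<and> fin_borel M2 \<and>
      bochner_int M1 kern v1 \<and> bochner_int M2 kern v2 \<and> g = v1 - v2 \<and>
      bochner_int M1 (\<lambda>y. kern (\<phi> t y)) w1 \<and> bochner_int M2 (\<lambda>y. kern (\<phi> t y)) w2 \<and>
      h = w1 - w2)"

definition domC :: "('a::topological_space \<Rightarrow> 'c::banach) \<Rightarrow> (real \<Rightarrow> 'a \<Rightarrow> 'a) \<Rightarrow> 'c set" where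
  "domC kern \<phi> = {g \<in> Dom kern. \<exists>L. ((\<lambda>t. (1 / t) *\<^sub>R (Kbar kern \<phi> t g - g)) \<longlongrightarrow> L) (at_right 0)}"

definition bprime :: "('a \<Rightarrow> 'c::banach) \<Rightarrow> (real \<Rightarrow> 'a \<Rightarrow> 'a) \<Rightarrow> real \<Rightarrow> 'a \<Rightarrow> 'c" where
  "bprime kern \<phi> T x = (THE v. bochner_int (restrict_space lborel {0..T}) (\<lambda>s. kern (\<phi> s x)) v)"

definition densely_defined :: "('b::zero \<Rightarrow> 'c \<Rightarrow> complex) \<Rightarrow> 'c set \<Rightarrow> bool" where
  "densely_defined p S \<longleftrightarrow> (\<forall>g. (\<forall>h\<in>S. p g h = 0) \<longrightarrow> g = 0)"

end

theory Submission
  imports Defs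
begin

lemma bochner_int_simple:
  assumes "Bochner_Integration.simple_bochner_integrable M s"
  shows "bochner_int M s (Bochner_Integration.simple_bochner_integral M s)"
  unfolding bochner_int_def
  by (rule exI[of _ "\<lambda>_. s"]) (auto simp: assms)

lemma meas_norm_diff:
  fixes F :: "'x \<Rightarrow> 'c::real_normed_vector"
  assumes F: "F \<in> borel_measurable M" and s: "simple_function M s"
  shows "(\<lambda>y. norm (F y - s y)) \<in> borel_measurable M"
proof -
  have eq: "norm (F y - s y) = (\<Sum>c\<in>s`space M. indicator {x\<in>space M. s x = c} y * norm (F y - c))"
    if "y \<in> space M" for y
  proof -
    have "(\<Sum>c\<in>s`space M. indicator {x\<in>space M. s x = c} y * norm (F y - c))
        = (\<Sum>c\<in>s`space M. if c = s y then norm (F y - c) else 0)"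
      by (rule sum.cong) (auto simp: indicator_def that)
    also have "\<dots> = norm (F y - s y)"
      using that simple_functionD(1)[OF s] by (simp add: sum.delta')
    finally show ?thesis by simp
  qed
  have m: "(\<lambda>y. norm (F y - c)) \<in> borel_measurable M" for c
  proof -
    have "(\<lambda>z. norm (z - c)) \<in> borel_measurable borel"
      by (intro borel_measurable_continuous_onI continuous_intros)
    from measurable_compose[OF F this] show ?thesis by (simp add: o_def)
  qed
  have "(\<lambda>y. \<Sum>c\<in>s`space M. indicator {x\<in>space M. s x = c} y * norm (F y - c)) \<in> borel_measurable M"
  proof (intro borel_measurable_sum borel_measurable_times m borel_measurable_indicator)
    fix c assume "c \<in> s ` space M"
    have "{x\<in>space M. s x = c} = s -` {c} \<inter> space M" by auto
    then show "{x\<in>space M. s x = c} \<in> sets M" using simple_functionD(2)[OF s] by simp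
  qed
  then show ?thesis using eq by (subst measurable_cong[where g="\<lambda>y. \<Sum>c\<in>s`space M. indicator {x\<in>space M. s x = c} y * norm (F y - c)"]) auto
qed

lemma sbi_measurable: "Bochner_Integration.simple_bochner_integrable M s \<Longrightarrow> simple_function M s"
  by (auto elim: simple_bochner_integrable.cases)

lemma bochner_int_err:
  fixes F G :: "'x \<Rightarrow> 'c::banach"
  assumes fm: "finite_measure M" and bF: "bochner_int M F v" and bG: "bochner_int M G w"
    and mF: "F \<in> borel_measurable M" and mG: "G \<in> borel_measurable M"
    and d0: "d \<ge> 0" and bd: "\<forall>y\<in>space M. norm (F y - G y) \<le> d"
  shows "norm (v - w) \<le> d * measure M (space M)"
proof -
  obtain s where s: "\<And>i. Bochner_Integration.simple_bochner_integrable M (s i)"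
    and sL: "(\<lambda>i. \<integral>\<^sup>+y. ennreal (norm (F y - s i y)) \<partial>M) \<longlonglongrightarrow> 0"
    and sv: "(\<lambda>i. Bochner_Integration.simple_bochner_integral M (s i)) \<longlonglongrightarrow> v"
    using bF unfolding bochner_int_def by blast
  obtain t where t: "\<And>i. Bochner_Integration.simple_bochner_integrable M (t i)"
    and tL: "(\<lambda>i. \<integral>\<^sup>+y. ennreal (norm (G y - t i y)) \<partial>M) \<longlonglongrightarrow> 0"
    and tw: "(\<lambda>i. Bochner_Integration.simple_bochner_integral M (t i)) \<longlonglongrightarrow> w"
    using bG unfolding bochner_int_def by blast
  have ineq: "ennreal (norm (Bochner_Integration.simple_bochner_integral M (s i) - Bochner_Integration.simple_bochner_integral M (t i)))
     \<le> (\<integral>\<^sup>+y. ennreal (norm (F y - s i y)) \<partial>M) + (\<integral>\<^sup>+y. ennreal (norm (G y - t i y)) \<partial>M)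
        + ennreal d * emeasure M (space M)" for i
  proof -
    have sm[measurable]: "s i \<in> borel_measurable M" "t i \<in> borel_measurable M"
      using s t by (auto intro: borel_measurable_simple_function sbi_measurable)
    have m1: "(\<lambda>y. norm (F y - s i y)) \<in> borel_measurable M"
      by (rule meas_norm_diff[OF mF sbi_measurable[OF s]])
    have m2: "(\<lambda>y. norm (G y - t i y)) \<in> borel_measurable M"
      by (rule meas_norm_diff[OF mG sbi_measurable[OF t]])
    have "ennreal (norm (Bochner_Integration.simple_bochner_integral M (s i) - Bochner_Integration.simple_bochner_integral M (t i)))
        = norm (Bochner_Integration.simple_bochner_integral M (\<lambda>x. s i x - t i x))"
      using s t by (subst simple_bochner_integral_diff) auto
    also have "\<dots> \<le> Bochner_Integration.simple_bochner_integral M (\<lambda>x. norm (s i x - t i x))"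
      using simple_bochner_integrable_compose2[of "(-)" M "s i" "t i"] s t
      by (auto intro!: simple_bochner_integral_norm_bound)
    also have "\<dots> = (\<integral>\<^sup>+x. norm (s i x - t i x) \<partial>M)"
      using simple_bochner_integrable_compose2[of "\<lambda>x y. norm (x - y)" M "s i" "t i"] s t
      by (auto intro!: simple_bochner_integral_eq_nn_integral)
    also have "\<dots> \<le> (\<integral>\<^sup>+x. (ennreal (norm (F x - s i x)) + ennreal (norm (G x - t i x))) + ennreal d \<partial>M)"
    proof (rule nn_integral_mono)
      fix x assume x: "x \<in> space M"
      have "norm (s i x - t i x) \<le> norm (F x - s i x) + norm (G x - t i x) + d"
        using bd x norm_triangle_ineq4[of "s i x - F x" "t i x - G x"]
        by (smt (verit, best) norm_diff_triangle_ineq norm_minus_commute diff_diff_eq2 add_diff_cancel_left' diff_add_cancel)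
      then show "ennreal (norm (s i x - t i x)) \<le> (ennreal (norm (F x - s i x)) + ennreal (norm (G x - t i x))) + ennreal d"
        by (metis ennreal_leI ennreal_plus norm_ge_zero add_nonneg_nonneg d0)
    qed
    also have "\<dots> = (\<integral>\<^sup>+x. ennreal (norm (F x - s i x)) + ennreal (norm (G x - t i x)) \<partial>M) + (\<integral>\<^sup>+x. ennreal d \<partial>M)"
      by (rule nn_integral_add) (use m1 m2 in auto)
    also have "(\<integral>\<^sup>+x. ennreal (norm (F x - s i x)) + ennreal (norm (G x - t i x)) \<partial>M)
       = (\<integral>\<^sup>+y. ennreal (norm (F y - s i y)) \<partial>M) + (\<integral>\<^sup>+y. ennreal (norm (G y - t i y)) \<partial>M)"
      by (rule nn_integral_add) (use m1 m2 in auto)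
    finally show ?thesis by simp
  qed
  have lim1: "(\<lambda>i. ennreal (norm (Bochner_Integration.simple_bochner_integral M (s i) - Bochner_Integration.simple_bochner_integral M (t i))))
      \<longlonglongrightarrow> ennreal (norm (v - w))"
    by (intro tendsto_ennrealI tendsto_norm tendsto_diff sv tw)
  have lim2: "(\<lambda>i. (\<integral>\<^sup>+y. ennreal (norm (F y - s i y)) \<partial>M) + (\<integral>\<^sup>+y. ennreal (norm (G y - t i y)) \<partial>M)
        + ennreal d * emeasure M (space M)) \<longlonglongrightarrow> 0 + 0 + ennreal d * emeasure M (space M)"
    by (intro tendsto_add sL tL tendsto_const)
  have "ennreal (norm (v - w)) \<le> 0 + 0 + ennreal d * emeasure M (space M)"
    by (rule LIMSEQ_le[OF lim1 lim2]) (use ineq in auto)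
  also have "\<dots> = ennreal (d * measure M (space M))"
    using finite_measure.emeasure_eq_measure[OF fm] d0 by (simp add: ennreal_mult)
  finally show ?thesis
    using d0 by (simp add: ennreal_le_iff)
qed

primrec selp :: "real \<Rightarrow> 'c::real_normed_vector list \<Rightarrow> 'c \<Rightarrow> 'c" where
  "selp e [] z = 0"
| "selp e (c # cs) z = (if z \<in> ball c e then c else selp e cs z)"

lemma selp_close: "z \<in> (\<Union>c\<in>set cs. ball c e) \<Longrightarrow> dist (selp e cs z) z < e"
  by (induction cs) (auto simp: dist_commute)

lemma selp_range: "selp e cs z \<in> insert 0 (set cs)"
  by (induction cs) auto

lemma selp_meas: "selp e cs \<in> borel_measurable borel"
proof (induction cs)
  case Nil
  then show ?case by simp
next
  case (Cons c cs)
  have "(\<lambda>z. if z \<in> ball c e then c else selp e cs z) \<in> borel_measurable borel"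
    by (rule measurable_If_set) (use Cons in auto)
  then show ?case by (simp add: fun_eq_iff)
qed

lemma simple_approx:
  fixes F :: "'x \<Rightarrow> 'c::banach"
  assumes F: "F \<in> borel_measurable M" and K: "compact K" "F ` space M \<subseteq> K" and e: "e > 0"
  shows "\<exists>s. simple_function M s \<and> (\<forall>y\<in>space M. norm (F y - s y) \<le> e)"
proof -
  have "K \<subseteq> (\<Union>c\<in>K. ball c e)" using e by auto
  then obtain C where C: "C \<subseteq> K" "finite C" "K \<subseteq> (\<Union>c\<in>C. ball c e)"
    using compactE_image[OF K(1), of K "\<lambda>c. ball c e"] by blast
  obtain cs where cs: "set cs = C" using finite_list[OF C(2)] by blast
  define s where "s = (\<lambda>y. selp e cs (F y))"
  have sm: "s \<in> borel_measurable M"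
    unfolding s_def using measurable_compose[OF F selp_meas] by (simp add: o_def)
  have "s ` space M \<subseteq> insert 0 (set cs)" unfolding s_def using selp_range by blast
  then have "finite (s ` space M)" by (rule finite_subset) simp
  then have "simple_function M s" by (rule simple_function_borel_measurable[OF sm])
  moreover have "\<forall>y\<in>space M. norm (F y - s y) \<le> e"
  proof
    fix y assume "y \<in> space M"
    then have "F y \<in> (\<Union>c\<in>set cs. ball c e)" using K(2) C(3) cs by blast
    from selp_close[OF this] show "norm (F y - s y) \<le> e"
      unfolding s_def by (simp add: dist_norm norm_minus_commute)
  qed
  ultimately show ?thesis by blast
qed

lemma simple_approx_fin:
  fixes F :: "'x \<Rightarrow> 'c::banach"
  assumes fm: "finite_measure M" and F: "F \<in> borel_measurable M" and K: "compact K" "F ` space M \<subseteq> K"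
  shows "\<exists>s. \<forall>n. Bochner_Integration.simple_bochner_integrable M (s n) \<and>
     (\<forall>y\<in>space M. norm (F y - s n y) \<le> 1 / Suc n)"
proof -
  have "\<forall>n. \<exists>s. Bochner_Integration.simple_bochner_integrable M s \<and>
     (\<forall>y\<in>space M. norm (F y - s y) \<le> 1 / Suc n)"
  proof
    fix n
    obtain s where s: "simple_function M s" "\<forall>y\<in>space M. norm (F y - s y) \<le> 1 / Suc n"
      using simple_approx[OF F K, of "1 / Suc n"] by auto
    have "Bochner_Integration.simple_bochner_integrable M s"
      by (rule simple_bochner_integrable.intros[OF s(1)])
         (use finite_measure.emeasure_finite[OF fm] in auto)
    then show "\<exists>s. Bochner_Integration.simple_bochner_integrable M s \<and>
     (\<forall>y\<in>space M. norm (F y - s y) \<le> 1 / Suc n)" using s(2) by blast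
  qed
  then show ?thesis by metis
qed

lemma simple_HK:
  fixes s :: "real \<Rightarrow> 'c::banach"
  assumes s: "simple_function (restrict_space lborel {a..b}) s"
  shows "(s has_integral Bochner_Integration.simple_bochner_integral (restrict_space lborel {a..b}) s) {a..b}"
proof -
  let ?R = "restrict_space lborel {a..b}"
  have sp: "space ?R = {a..b}" by simp
  have fin: "finite (s ` {a..b})" using simple_functionD(1)[OF s] by simp
  have Ameas: "{x\<in>{a..b}. s x = y} \<in> sets borel" for y
  proof -
    have "{x\<in>{a..b}. s x = y} = s -` {y} \<inter> space ?R" using sp by auto
    then have "{x\<in>{a..b}. s x = y} \<in> sets ?R" using simple_functionD(2)[OF s] by simp
    then show ?thesis by (subst (asm) sets_restrict_space_iff) auto
  qed
  have each: "((\<lambda>x. indicator {x\<in>{a..b}. s x = y} x *\<^sub>R y) has_integral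
      (measure ?R {x\<in>space ?R. s x = y} *\<^sub>R y)) {a..b}" for y
  proof -
    let ?A = "{x\<in>{a..b}. s x = y}"
    have mR: "measure ?R {x\<in>space ?R. s x = y} = measure lborel ?A"
    proof -
      have "measure ?R ?A = measure lborel ?A" by (rule measure_restrict_space) auto
      moreover have "{x\<in>space ?R. s x = y} = ?A" using sp by simp
      ultimately show ?thesis by simp
    qed
    have "emeasure lborel ?A \<le> emeasure lborel {a..b}"
      by (rule emeasure_mono) auto
    then have finA: "emeasure lborel ?A < \<infinity>"
      using emeasure_lborel_Icc_eq[of a b] by (simp add: le_less_trans)
    have "((\<lambda>x. 1::real) has_integral measure lborel ?A) ?A"
      by (subst has_integral_iff_emeasure_lborel) (use Ameas finA emeasure_eq_ennreal_measure[of lborel ?A] in auto)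
    then have "((\<lambda>x. if x \<in> ?A then 1 else (0::real)) has_integral measure lborel ?A) {a..b}"
      by (subst has_integral_restrict) auto
    then have "((\<lambda>x. (if x \<in> ?A then 1 else (0::real)) *\<^sub>R y) has_integral measure lborel ?A *\<^sub>R y) {a..b}"
      by (rule has_integral_scaleR_left)
    moreover have "(\<lambda>x. (if x \<in> ?A then 1 else (0::real)) *\<^sub>R y) = (\<lambda>x. indicator ?A x *\<^sub>R y)"
      by (auto simp: indicator_def)
    ultimately show ?thesis using mR by simp
  qed
  have "((\<lambda>x. \<Sum>y\<in>s`{a..b}. indicator {x\<in>{a..b}. s x = y} x *\<^sub>R y) has_integral
      (\<Sum>y\<in>s`{a..b}. measure ?R {x\<in>space ?R. s x = y} *\<^sub>R y)) {a..b}"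
    by (rule has_integral_sum[OF fin each])
  then have "((\<lambda>x. \<Sum>y\<in>s`{a..b}. indicator {x\<in>{a..b}. s x = y} x *\<^sub>R y) has_integral
      Bochner_Integration.simple_bochner_integral ?R s) {a..b}"
    by (simp add: simple_bochner_integral_def)
  then show ?thesis
  proof (rule has_integral_eq[rotated])
    fix x assume x: "x \<in> {a..b}"
    have "(\<Sum>y\<in>s`{a..b}. indicator {x\<in>{a..b}. s x = y} x *\<^sub>R y)
        = (\<Sum>y\<in>s`{a..b}. if y = s x then s x else 0)"
      using x by (intro sum.cong) (auto simp: indicator_def)
    also have "\<dots> = s x" using x fin by (simp add: sum.delta')
    finally show "(\<Sum>y\<in>s`{a..b}. indicator {x\<in>{a..b}. s x = y} x *\<^sub>R y) = s x" .
  qed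
qed

lemma unif_bochner:
  fixes F :: "'x \<Rightarrow> 'c::banach"
  assumes fm: "finite_measure M"
    and s: "\<And>n. Bochner_Integration.simple_bochner_integrable M (s n)"
    and bd: "\<And>n y. y \<in> space M \<Longrightarrow> norm (F y - s n y) \<le> e n"
    and e: "e \<longlonglongrightarrow> 0"
    and lim: "(\<lambda>n. Bochner_Integration.simple_bochner_integral M (s n)) \<longlonglongrightarrow> v"
  shows "bochner_int M F v"
  unfolding bochner_int_def
proof (intro exI[of _ s] conjI allI s lim)
  show "AE y in M. (\<lambda>i. s i y) \<longlonglongrightarrow> F y"
  proof (rule AE_I2)
    fix y assume y: "y \<in> space M"
    have "(\<lambda>n. s n y - F y) \<longlonglongrightarrow> 0"
      by (rule Lim_null_comparison[OF _ e]) (use bd y in \<open>auto simp: norm_minus_commute\<close>)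
    then show "(\<lambda>i. s i y) \<longlonglongrightarrow> F y" by (rule LIM_zero_cancel)
  qed
  let ?m = "measure M (space M)"
  have le: "(\<integral>\<^sup>+y. ennreal (norm (F y - s i y)) \<partial>M) \<le> ennreal (max 0 (e i) * ?m)" for i
  proof -
    have "(\<integral>\<^sup>+y. ennreal (norm (F y - s i y)) \<partial>M) \<le> (\<integral>\<^sup>+y. ennreal (max 0 (e i)) \<partial>M)"
    proof (rule nn_integral_mono)
      fix y assume "y \<in> space M"
      then have "norm (F y - s i y) \<le> max 0 (e i)" using bd[of y i] by linarith
      then show "ennreal (norm (F y - s i y)) \<le> ennreal (max 0 (e i))" by (rule ennreal_leI)
    qed
    also have "\<dots> = ennreal (max 0 (e i)) * emeasure M (space M)" by simp
    also have "\<dots> = ennreal (max 0 (e i) * ?m)"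
      using finite_measure.emeasure_eq_measure[OF fm] by (simp add: ennreal_mult)
    finally show ?thesis .
  qed
  have "(\<lambda>i. ennreal (max 0 (e i) * ?m)) \<longlonglongrightarrow> ennreal (max 0 0 * ?m)"
    by (intro tendsto_ennrealI tendsto_mult tendsto_max e tendsto_const)
  then have lim0: "(\<lambda>i. ennreal (max 0 (e i) * ?m)) \<longlonglongrightarrow> 0" by simp
  show "(\<lambda>i. \<integral>\<^sup>+y. ennreal (norm (F y - s i y)) \<partial>M) \<longlonglongrightarrow> 0"
    by (rule tendsto_sandwich[OF _ _ tendsto_const lim0]) (use le in auto)
qed

lemma sbi_limit:
  fixes F :: "'x \<Rightarrow> 'c::banach"
  assumes fm: "finite_measure M" and b: "bochner_int M F v" and F: "F \<in> borel_measurable M"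
    and s: "\<And>n. Bochner_Integration.simple_bochner_integrable M (s n)"
    and bd: "\<And>n y. y \<in> space M \<Longrightarrow> norm (F y - s n y) \<le> e n"
    and e0: "\<And>n. e n \<ge> 0" and e: "e \<longlonglongrightarrow> 0"
  shows "(\<lambda>n. Bochner_Integration.simple_bochner_integral M (s n)) \<longlonglongrightarrow> v"
proof -
  have le0: "norm (v - Bochner_Integration.simple_bochner_integral M (s n)) \<le> e n * measure M (space M)" for n
  proof (rule bochner_int_err[OF fm b bochner_int_simple[OF s] F])
    show "s n \<in> borel_measurable M"
      by (rule borel_measurable_simple_function[OF sbi_measurable[OF s]])
    show "0 \<le> e n" by (rule e0)
    show "\<forall>y\<in>space M. norm (F y - s n y) \<le> e n" using bd by blast
  qed
  have le: "norm (Bochner_Integration.simple_bochner_integral M (s n) - v) \<le> e n * measure M (space M)" for n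
    using le0[of n] by (simp add: norm_minus_commute)
  have "(\<lambda>n. e n * measure M (space M)) \<longlonglongrightarrow> 0 * measure M (space M)"
    by (intro tendsto_mult e tendsto_const)
  then have lim: "(\<lambda>n. e n * measure M (space M)) \<longlonglongrightarrow> 0" by simp
  have "(\<lambda>n. Bochner_Integration.simple_bochner_integral M (s n) - v) \<longlonglongrightarrow> 0"
    by (rule Lim_null_comparison[OF always_eventually lim]) (use le in blast)
  then show ?thesis by (rule LIM_zero_cancel)
qed

lemma finite_R: "finite_measure (restrict_space lborel {a..b::real})"
proof
  have sp: "space (restrict_space lborel {a..b}) = {a..b}" by simp
  have "emeasure (restrict_space lborel {a..b}) {a..b} = emeasure lborel {a..b}"
    by (rule emeasure_restrict_space) auto
  then show "emeasure (restrict_space lborel {a..b}) (space (restrict_space lborel {a..b})) \<noteq> \<infinity>"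
    using sp emeasure_lborel_Icc_eq[of a b] by simp
qed

lemma meas_R:
  fixes f :: "real \<Rightarrow> 'c::topological_space"
  assumes "continuous_on {a..b} f"
  shows "f \<in> borel_measurable (restrict_space lborel {a..b})"
proof -
  have "sets (restrict_space lborel {a..b}) = sets (restrict_space borel {a..b})"
    by (rule sets_restrict_space_cong) simp
  then have "measurable (restrict_space lborel {a..b}) borel = measurable (restrict_space borel {a..b}) (borel :: 'c measure)"
    by (rule measurable_cong_sets) simp
  then show ?thesis using borel_measurable_continuous_on_restrict[OF assms] by simp
qed

lemma inv_Suc_lim: "(\<lambda>n. 1 / real (Suc n)) \<longlonglongrightarrow> 0"
  using LIMSEQ_Suc[OF lim_inverse_n] by (simp add: inverse_eq_divide)

lemma sbi_R_limit:
  fixes f :: "real \<Rightarrow> 'c::banach"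
  assumes ab: "a \<le> b" and f: "continuous_on {a..b} f"
    and s: "\<And>n. simple_function (restrict_space lborel {a..b}) (s n)"
    and bd: "\<And>n y. y \<in> {a..b} \<Longrightarrow> norm (f y - s n y) \<le> 1 / real (Suc n)"
  shows "(\<lambda>n. Bochner_Integration.simple_bochner_integral (restrict_space lborel {a..b}) (s n)) \<longlonglongrightarrow> integral {a..b} f"
proof -
  let ?R = "restrict_space lborel {a..b}"
  have fi: "f integrable_on {a..b}" by (rule integrable_continuous_interval[OF f])
  have "norm (Bochner_Integration.simple_bochner_integral ?R (s n) - integral {a..b} f) \<le> 1 / real (Suc n) * (b - a)" for n
  proof -
    have h: "((\<lambda>y. s n y - f y) has_integral (Bochner_Integration.simple_bochner_integral ?R (s n) - integral {a..b} f)) (cbox a b)"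
      using has_integral_diff[OF simple_HK[OF s] integrable_integral[OF fi]] by simp
    have "norm (Bochner_Integration.simple_bochner_integral ?R (s n) - integral {a..b} f) \<le> 1 / real (Suc n) * Henstock_Kurzweil_Integration.content (cbox a b)"
      by (rule has_integral_bound[OF _ h]) (use bd in \<open>auto simp: norm_minus_commute\<close>)
    then show ?thesis using ab by simp
  qed
  note le = this
  have "(\<lambda>n. 1 / real (Suc n) * (b - a)) \<longlonglongrightarrow> 0 * (b - a)"
    by (intro tendsto_mult tendsto_const inv_Suc_lim)
  then have lim: "(\<lambda>n. 1 / real (Suc n) * (b - a)) \<longlonglongrightarrow> 0" by simp
  have "(\<lambda>n. Bochner_Integration.simple_bochner_integral ?R (s n) - integral {a..b} f) \<longlonglongrightarrow> 0"
    by (rule Lim_null_comparison[OF always_eventually lim]) (use le in blast)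
  then show ?thesis by (rule LIM_zero_cancel)
qed

lemma bochner_R:
  fixes f :: "real \<Rightarrow> 'c::banach"
  assumes ab: "a \<le> b" and f: "continuous_on {a..b} f"
  shows "bochner_int (restrict_space lborel {a..b}) f (integral {a..b} f)"
proof -
  let ?R = "restrict_space lborel {a..b}"
  have K: "compact (f ` {a..b})" by (rule compact_continuous_image[OF f]) simp
  have sp: "space ?R = {a..b}" by simp
  have K2: "f ` space ?R \<subseteq> f ` {a..b}" using sp by simp
  obtain s where sall: "\<forall>n. Bochner_Integration.simple_bochner_integrable ?R (s n) \<and>
     (\<forall>y\<in>space ?R. norm (f y - s n y) \<le> 1 / real (Suc n))"
    using simple_approx_fin[OF finite_R meas_R[OF f] K K2] by blast
  have s: "\<And>n. Bochner_Integration.simple_bochner_integrable ?R (s n)" using sall by blast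
  have bd: "\<And>n y. y \<in> space ?R \<Longrightarrow> norm (f y - s n y) \<le> 1 / real (Suc n)" using sall by blast
  show ?thesis
  proof (rule unif_bochner[OF finite_R s bd inv_Suc_lim])
    show "(\<lambda>n. Bochner_Integration.simple_bochner_integral ?R (s n)) \<longlonglongrightarrow> integral {a..b} f"
      by (rule sbi_R_limit[OF ab f]) (use sbi_measurable[OF s] bd sp in auto)
  qed
qed

lemma fin_borel_space: "fin_borel M \<Longrightarrow> space M = UNIV"
  unfolding fin_borel_def by (metis sets_eq_imp_space_eq space_borel)

lemma fin_borel_fm: "fin_borel M \<Longrightarrow> finite_measure M"
  unfolding fin_borel_def by simp

lemma cont_meas:
  assumes "fin_borel M" "continuous_on UNIV F"
  shows "F \<in> borel_measurable M"
proof -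
  have "sets M = sets borel" using assms(1) unfolding fin_borel_def by simp
  then have "measurable M borel = measurable borel (borel :: 'b measure)"
    by (rule measurable_cong_sets) simp
  then show ?thesis using borel_measurable_continuous_onI[OF assms(2)] by simp
qed

lemma approx_fb:
  fixes F :: "'a::topological_space \<Rightarrow> 'c::banach"
  assumes M: "fin_borel M" and X: "compact (UNIV :: 'a set)" and F: "continuous_on UNIV F"
  shows "\<exists>s. \<forall>n. Bochner_Integration.simple_bochner_integrable M (s n) \<and>
     (\<forall>y. norm (F y - s n y) \<le> 1 / real (Suc n))"
proof -
  have K: "compact (range F)" by (rule compact_continuous_image[OF F X])
  have K2: "F ` space M \<subseteq> range F" by auto
  from simple_approx_fin[OF fin_borel_fm[OF M] cont_meas[OF M F] K K2]
  show ?thesis using fin_borel_space[OF M] by simp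
qed

lemma integrable_fb:
  fixes f :: "'a::topological_space \<Rightarrow> 'd::{banach,second_countable_topology}"
  assumes M: "fin_borel M" and X: "compact (UNIV :: 'a set)" and f: "continuous_on UNIV f"
  shows "integrable M f"
proof -
  have "bounded (range f)" by (rule compact_imp_bounded[OF compact_continuous_image[OF f X]])
  then obtain B where B: "\<And>y. norm (f y) \<le> B" by (auto simp: bounded_iff)
  show ?thesis
    by (rule finite_measure.integrable_const_bound[OF fin_borel_fm[OF M], where B=B])
       (use B cont_meas[OF M f] in auto)
qed

lemma pairing_int:
  fixes F :: "'a::topological_space \<Rightarrow> 'c::banach" and L :: "'c \<Rightarrow> 'd::{banach,second_countable_topology}"
  assumes M: "fin_borel M" and X: "compact (UNIV :: 'a set)" and F: "continuous_on UNIV F"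
    and b: "bochner_int M F v" and L: "bounded_linear L"
  shows "L v = integral\<^sup>L M (\<lambda>y. L (F y))"
proof -
  have fm: "finite_measure M" by (rule fin_borel_fm[OF M])
  obtain s where s: "\<And>n. Bochner_Integration.simple_bochner_integrable M (s n)"
    and bd: "\<And>n y. norm (F y - s n y) \<le> 1 / real (Suc n)"
    using approx_fb[OF M X F] by blast
  have lim1: "(\<lambda>n. Bochner_Integration.simple_bochner_integral M (s n)) \<longlonglongrightarrow> v"
    by (rule sbi_limit[OF fm b cont_meas[OF M F] s bd _ inv_Suc_lim]) simp
  have lim2: "(\<lambda>n. L (Bochner_Integration.simple_bochner_integral M (s n))) \<longlonglongrightarrow> L v"
    by (rule bounded_linear.tendsto[OF L lim1])
  have Ls: "Bochner_Integration.simple_bochner_integrable M (\<lambda>y. L (s n y))" for n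
    using simple_bochner_integrable_compose2[of "\<lambda>x y. L x" M "s n" "s n"] s
      bounded_linear.linear[OF L] linear_0 by auto
  have eq: "L (Bochner_Integration.simple_bochner_integral M (s n)) = integral\<^sup>L M (\<lambda>y. L (s n y))" for n
    using simple_bochner_integral_linear[OF bounded_linear.linear[OF L] s]
      simple_bochner_integrable_eq_integral[OF Ls] by simp
  have "bounded (range F)" by (rule compact_imp_bounded[OF compact_continuous_image[OF F X]])
  then obtain B where B: "\<And>y. norm (F y) \<le> B" by (auto simp: bounded_iff)
  obtain K where K: "\<And>x. norm (L x) \<le> norm x * K" and K0: "K > 0"
    using bounded_linear.pos_bounded[OF L] by blast
  have conv: "(\<lambda>n. s n y) \<longlonglongrightarrow> F y" for y
  proof -
    have "(\<lambda>n. s n y - F y) \<longlonglongrightarrow> 0"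
      by (rule Lim_null_comparison[OF always_eventually inv_Suc_lim]) (use bd in \<open>simp add: norm_minus_commute\<close>)
    then show ?thesis by (rule LIM_zero_cancel)
  qed
  have lim3: "(\<lambda>n. integral\<^sup>L M (\<lambda>y. L (s n y))) \<longlonglongrightarrow> integral\<^sup>L M (\<lambda>y. L (F y))"
  proof (rule integral_dominated_convergence[where w="\<lambda>_. (B + 1) * K"])
    show "(\<lambda>y. L (F y)) \<in> borel_measurable M"
      by (rule cont_meas[OF M]) (intro continuous_on_compose2[OF linear_continuous_on[OF L] F], auto)
    show "(\<lambda>y. L (s n y)) \<in> borel_measurable M" for n
      by (rule borel_measurable_simple_function[OF sbi_measurable[OF Ls]])
    show "integrable M (\<lambda>_. (B + 1) * K)" using finite_measure.integrable_const[OF fm] .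
    show "AE y in M. (\<lambda>n. L (s n y)) \<longlonglongrightarrow> L (F y)"
      by (intro AE_I2 bounded_linear.tendsto[OF L] conv)
    show "AE y in M. norm (L (s n y)) \<le> (B + 1) * K" for n
    proof (intro AE_I2)
      fix y
      have "norm (s n y) \<le> norm (F y) + norm (F y - s n y)"
        by (metis add_diff_cancel_left' diff_add_cancel norm_triangle_ineq4 norm_minus_commute add.commute)
      also have "\<dots> \<le> B + 1"
      proof -
        have "1 / real (Suc n) \<le> 1" by simp
        then show ?thesis using B[of y] bd[where n=n and y=y] by linarith
      qed
      finally have "norm (s n y) \<le> B + 1" .
      then show "norm (L (s n y)) \<le> (B + 1) * K"
        using K[of "s n y"] K0 by (smt (verit) mult_right_mono)
    qed
  qed
  show ?thesis using LIMSEQ_unique[OF lim2] lim3 eq by simp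
qed

lemma sbi_zero: "Bochner_Integration.simple_bochner_integrable M (\<lambda>y. 0::'v::real_normed_vector)"
  by (rule simple_bochner_integrable.intros) auto

lemma sbi_zero_val: "Bochner_Integration.simple_bochner_integral M (\<lambda>y. 0::'v::real_normed_vector) = 0"
  unfolding simple_bochner_integral_def by (rule sum.neutral) auto

lemma sbi_sum:
  fixes r :: "'i \<Rightarrow> 'x \<Rightarrow> real" and v :: "'i \<Rightarrow> 'v::real_normed_vector"
  assumes "finite C" "\<And>c. c \<in> C \<Longrightarrow> Bochner_Integration.simple_bochner_integrable M (r c)"
  shows "Bochner_Integration.simple_bochner_integrable M (\<lambda>y. \<Sum>c\<in>C. r c y *\<^sub>R v c) \<and>
    Bochner_Integration.simple_bochner_integral M (\<lambda>y. \<Sum>c\<in>C. r c y *\<^sub>R v c) =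
      (\<Sum>c\<in>C. Bochner_Integration.simple_bochner_integral M (r c) *\<^sub>R v c)"
  using assms
proof (induction C rule: finite_induct)
  case empty
  then show ?case using sbi_zero[of M] sbi_zero_val[of M] by simp
next
  case (insert c C)
  have rc: "Bochner_Integration.simple_bochner_integrable M (r c)" using insert by simp
  have IH: "Bochner_Integration.simple_bochner_integrable M (\<lambda>y. \<Sum>c\<in>C. r c y *\<^sub>R v c)"
     "Bochner_Integration.simple_bochner_integral M (\<lambda>y. \<Sum>c\<in>C. r c y *\<^sub>R v c) =
      (\<Sum>c\<in>C. Bochner_Integration.simple_bochner_integral M (r c) *\<^sub>R v c)"
    using insert by auto
  have sc: "Bochner_Integration.simple_bochner_integrable M (\<lambda>y. r c y *\<^sub>R v c)"
    using simple_bochner_integrable_compose2[of "\<lambda>x y. x *\<^sub>R v c" M "r c" "r c"] rc by simp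
  have eqf: "(\<lambda>y. \<Sum>c\<in>insert c C. r c y *\<^sub>R v c) = (\<lambda>y. r c y *\<^sub>R v c + (\<Sum>c\<in>C. r c y *\<^sub>R v c))"
    using insert by simp
  have s1: "Bochner_Integration.simple_bochner_integrable M (\<lambda>y. r c y *\<^sub>R v c + (\<Sum>c\<in>C. r c y *\<^sub>R v c))"
    using simple_bochner_integrable_compose2[of "\<lambda>x y. x + y" M "\<lambda>y. r c y *\<^sub>R v c" "\<lambda>y. \<Sum>c\<in>C. r c y *\<^sub>R v c"] sc IH(1)
    by simp
  have lin: "linear (\<lambda>x::real. x *\<^sub>R v c)"
    by (rule bounded_linear.linear[OF bounded_linear_scaleR_left])
  have "Bochner_Integration.simple_bochner_integral M (\<lambda>y. r c y *\<^sub>R v c + (\<Sum>c\<in>C. r c y *\<^sub>R v c))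
     = Bochner_Integration.simple_bochner_integral M (\<lambda>y. r c y *\<^sub>R v c) + Bochner_Integration.simple_bochner_integral M (\<lambda>y. \<Sum>c\<in>C. r c y *\<^sub>R v c)"
    by (rule simple_bochner_integral_add[OF sc IH(1)])
  also have "Bochner_Integration.simple_bochner_integral M (\<lambda>y. r c y *\<^sub>R v c) = Bochner_Integration.simple_bochner_integral M (r c) *\<^sub>R v c"
    using simple_bochner_integral_linear[OF lin rc] by simp
  finally show ?case using eqf s1 IH(2) insert by simp
qed

lemma unif_int_conv:
  fixes f :: "'x \<Rightarrow> 'd::{banach,second_countable_topology}"
  assumes fm: "finite_measure M" and f: "f \<in> borel_measurable M" and B: "\<And>y. y \<in> space M \<Longrightarrow> norm (f y) \<le> B"
    and s: "\<And>n. Bochner_Integration.simple_bochner_integrable M (s n)"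
    and bd: "\<And>n y. y \<in> space M \<Longrightarrow> norm (f y - s n y) \<le> 1 / real (Suc n)"
  shows "(\<lambda>n. integral\<^sup>L M (s n)) \<longlonglongrightarrow> integral\<^sup>L M f"
proof (rule integral_dominated_convergence[where w="\<lambda>_. B + 1"])
  show "f \<in> borel_measurable M" by (rule f)
  show "s n \<in> borel_measurable M" for n
    by (rule borel_measurable_simple_function[OF sbi_measurable[OF s]])
  show "integrable M (\<lambda>_. B + 1)" using finite_measure.integrable_const[OF fm] .
  show "AE y in M. (\<lambda>n. s n y) \<longlonglongrightarrow> f y"
  proof (rule AE_I2)
    fix y assume y: "y \<in> space M"
    have "(\<lambda>n. s n y - f y) \<longlonglongrightarrow> 0"
      by (rule Lim_null_comparison[OF always_eventually inv_Suc_lim]) (use bd[OF y] in \<open>simp add: norm_minus_commute\<close>)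
    then show "(\<lambda>n. s n y) \<longlonglongrightarrow> f y" by (rule LIM_zero_cancel)
  qed
  show "AE y in M. norm (s n y) \<le> B + 1" for n
  proof (rule AE_I2)
    fix y assume y: "y \<in> space M"
    have "norm (s n y) \<le> norm (f y) + norm (f y - s n y)"
      by (metis add_diff_cancel_left' diff_add_cancel norm_triangle_ineq4 norm_minus_commute add.commute)
    moreover have "1 / real (Suc n) \<le> 1" by simp
    ultimately show "norm (s n y) \<le> B + 1" using B[OF y] bd[OF y, of n] by linarith
  qed
qed

lemma bochner_comb:
  fixes \<psi> :: "'v::banach \<Rightarrow> 'x \<Rightarrow> real" and C :: "'v set"
  assumes fm: "finite_measure M" and fin: "finite C"
    and meas: "\<And>c. c \<in> C \<Longrightarrow> \<psi> c \<in> borel_measurable M"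
    and bnd: "\<And>c y. c \<in> C \<Longrightarrow> y \<in> space M \<Longrightarrow> \<bar>\<psi> c y\<bar> \<le> B"
  shows "bochner_int M (\<lambda>y. \<Sum>c\<in>C. \<psi> c y *\<^sub>R c) (\<Sum>c\<in>C. integral\<^sup>L M (\<psi> c) *\<^sub>R c)"
proof -
  have "\<forall>c\<in>C. \<exists>r. \<forall>n. Bochner_Integration.simple_bochner_integrable M (r n) \<and>
     (\<forall>y\<in>space M. norm (\<psi> c y - r n y) \<le> 1 / real (Suc n))"
  proof
    fix c assume c: "c \<in> C"
    have "\<forall>y\<in>space M. -B \<le> \<psi> c y \<and> \<psi> c y \<le> B" using bnd[OF c] by (metis abs_le_iff minus_le_iff)
    then have "\<psi> c ` space M \<subseteq> {-B..B}" by auto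
    then show "\<exists>r. \<forall>n. Bochner_Integration.simple_bochner_integrable M (r n) \<and>
     (\<forall>y\<in>space M. norm (\<psi> c y - r n y) \<le> 1 / real (Suc n))"
      using simple_approx_fin[OF fm meas[OF c] compact_Icc] by blast
  qed
  then obtain r where r: "\<And>c n. c \<in> C \<Longrightarrow> Bochner_Integration.simple_bochner_integrable M (r c n)"
    and rb: "\<And>c n y. c \<in> C \<Longrightarrow> y \<in> space M \<Longrightarrow> norm (\<psi> c y - r c n y) \<le> 1 / real (Suc n)"
    by metis
  define s where "s n y = (\<Sum>c\<in>C. r c n y *\<^sub>R c)" for n y
  have ss: "Bochner_Integration.simple_bochner_integrable M (s n)
     \<and> Bochner_Integration.simple_bochner_integral M (s n) = (\<Sum>c\<in>C. Bochner_Integration.simple_bochner_integral M (r c n) *\<^sub>R c)" for n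
    unfolding s_def[abs_def] by (rule sbi_sum[OF fin r])
  let ?K = "\<Sum>c\<in>C. norm c"
  show ?thesis
  proof (rule unif_bochner[OF fm, where s=s and e="\<lambda>n. ?K * (1 / real (Suc n))"])
    show "Bochner_Integration.simple_bochner_integrable M (s n)" for n using ss by blast
    show "(\<lambda>n. ?K * (1 / real (Suc n))) \<longlonglongrightarrow> 0"
    proof -
      have "(\<lambda>n. ?K * (1 / real (Suc n))) \<longlonglongrightarrow> ?K * 0" by (intro tendsto_mult tendsto_const inv_Suc_lim)
      then show ?thesis by simp
    qed
    show "norm ((\<Sum>c\<in>C. \<psi> c y *\<^sub>R c) - s n y) \<le> ?K * (1 / real (Suc n))" if y: "y \<in> space M" for n y
    proof -
      have "(\<Sum>c\<in>C. \<psi> c y *\<^sub>R c) - s n y = (\<Sum>c\<in>C. (\<psi> c y - r c n y) *\<^sub>R c)"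
        unfolding s_def by (simp add: sum_subtractf scaleR_diff_left)
      also have "norm \<dots> \<le> (\<Sum>c\<in>C. norm ((\<psi> c y - r c n y) *\<^sub>R c))" by (rule norm_sum)
      also have "\<dots> \<le> (\<Sum>c\<in>C. norm c * (1 / real (Suc n)))"
      proof (rule sum_mono)
        fix c assume c: "c \<in> C"
        have "\<bar>\<psi> c y - r c n y\<bar> \<le> 1 / real (Suc n)" using rb[OF c y, of n] by simp
        then show "norm ((\<psi> c y - r c n y) *\<^sub>R c) \<le> norm c * (1 / real (Suc n))"
        proof -
          have "norm ((\<psi> c y - r c n y) *\<^sub>R c) = \<bar>\<psi> c y - r c n y\<bar> * norm c" by simp
          also have "\<dots> \<le> 1 / real (Suc n) * norm c"
            by (rule mult_right_mono[OF \<open>\<bar>\<psi> c y - r c n y\<bar> \<le> 1 / real (Suc n)\<close> norm_ge_zero])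
          finally show ?thesis by (simp add: mult.commute)
        qed
      qed
      also have "\<dots> = ?K * (1 / real (Suc n))" by (rule sum_distrib_right[symmetric])
      finally show ?thesis .
    qed
    show "(\<lambda>n. Bochner_Integration.simple_bochner_integral M (s n)) \<longlonglongrightarrow> (\<Sum>c\<in>C. integral\<^sup>L M (\<psi> c) *\<^sub>R c)"
    proof -
      have eq: "Bochner_Integration.simple_bochner_integral M (s n) = (\<Sum>c\<in>C. integral\<^sup>L M (r c n) *\<^sub>R c)" for n
      proof -
        have "(\<Sum>c\<in>C. Bochner_Integration.simple_bochner_integral M (r c n) *\<^sub>R c) = (\<Sum>c\<in>C. integral\<^sup>L M (r c n) *\<^sub>R c)"
          by (rule sum.cong[OF refl]) (simp add: simple_bochner_integrable_eq_integral[OF r])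
        then show ?thesis using ss[of n] by simp
      qed
      have "(\<lambda>n. \<Sum>c\<in>C. integral\<^sup>L M (r c n) *\<^sub>R c) \<longlonglongrightarrow> (\<Sum>c\<in>C. integral\<^sup>L M (\<psi> c) *\<^sub>R c)"
      proof (intro tendsto_sum tendsto_scaleR tendsto_const)
        fix c assume c: "c \<in> C"
        show "(\<lambda>n. integral\<^sup>L M (r c n)) \<longlonglongrightarrow> integral\<^sup>L M (\<psi> c)"
        proof (rule unif_int_conv[OF fm meas[OF c] _ r[OF c]])
          show "norm (\<psi> c y) \<le> B" if "y \<in> space M" for y using bnd[OF c that] by simp
          show "norm (\<psi> c y - r c n y) \<le> 1 / real (Suc n)" if "y \<in> space M" for n y by (rule rb[OF c that])
        qed
      qed
      then show ?thesis using eq by simp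
    qed
  qed
qed

lemma pou:
  fixes F :: "'a::topological_space \<Rightarrow> 'c::banach"
  assumes X: "compact (UNIV :: 'a set)" and F: "continuous_on UNIV F" and e: "e > 0"
  shows "\<exists>C \<psi>. finite C \<and> (\<forall>c\<in>C. continuous_on UNIV (\<psi> c) \<and> (\<forall>y. 0 \<le> \<psi> c y \<and> \<psi> c y \<le> 1))
     \<and> (\<forall>y. norm (F y - (\<Sum>c\<in>C. \<psi> c y *\<^sub>R c)) \<le> e)"
proof -
  have K: "compact (range F)" by (rule compact_continuous_image[OF F X])
  have "range F \<subseteq> (\<Union>c\<in>range F. ball c (e/2))" using e by auto
  then obtain C where C: "C \<subseteq> range F" "finite C" "range F \<subseteq> (\<Union>c\<in>C. ball c (e/2))"
    using compactE_image[OF K, of "range F" "\<lambda>c. ball c (e/2)"] by blast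
  define \<psi>' where "\<psi>' c y = max 0 (e - dist (F y) c)" for c y
  define S where "S y = (\<Sum>c\<in>C. \<psi>' c y)" for y
  have p0: "0 \<le> \<psi>' c y" for c y unfolding \<psi>'_def by (rule max.cobounded1)
  have pS: "\<psi>' c y \<le> S y" if "c \<in> C" for c y
    unfolding S_def by (rule member_le_sum[OF that p0 C(2)])
  have Spos: "S y \<ge> e / 2" for y
  proof -
    have "F y \<in> (\<Union>c\<in>C. ball c (e/2))" using C(3) by (rule subsetD) simp
    then obtain c where c0: "c \<in> C" "F y \<in> ball c (e/2)" by (rule UN_E)
    then have c: "c \<in> C" "dist c (F y) < e / 2" by (simp_all add: mem_ball)
    have "dist (F y) c < e / 2" using c(2) by (simp only: dist_commute)
    then have "e / 2 \<le> e - dist (F y) c" by linarith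
    then have "e / 2 \<le> \<psi>' c y" unfolding \<psi>'_def by (rule max.coboundedI2)
    also have "\<dots> \<le> S y" by (rule pS[OF c(1)])
    finally show ?thesis .
  qed
  have Sgt: "S y > 0" for y using Spos[of y] e by linarith
  have Snz: "S y \<noteq> 0" for y using Sgt[of y] by simp
  define \<psi> where "\<psi> c y = \<psi>' c y / S y" for c y
  have cont: "continuous_on UNIV (\<psi> c)" for c
  proof -
    have c1: "continuous_on UNIV (\<psi>' c)" for c
    proof -
      have "continuous_on UNIV (\<lambda>y. dist (F y) c)" by (rule continuous_on_dist[OF F continuous_on_const])
      then have "continuous_on UNIV (\<lambda>y. e - dist (F y) c)" by (rule continuous_on_diff[OF continuous_on_const])
      then show ?thesis unfolding \<psi>'_def[abs_def] by (rule continuous_on_max[OF continuous_on_const])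
    qed
    have c2: "continuous_on UNIV S"
      unfolding S_def[abs_def] by (intro continuous_on_sum c1)
    show ?thesis unfolding \<psi>_def[abs_def] by (intro continuous_on_divide c1 c2) (use Snz in auto)
  qed
  have rng: "0 \<le> \<psi> c y \<and> \<psi> c y \<le> 1" if "c \<in> C" for c y
    unfolding \<psi>_def using p0[of c y] pS[OF that, of y] Sgt[of y] by (simp add: divide_le_eq_1)
  have sum1: "(\<Sum>c\<in>C. \<psi> c y) = 1" for y
  proof -
    have "(\<Sum>c\<in>C. \<psi> c y) = (\<Sum>c\<in>C. \<psi>' c y) / S y" unfolding \<psi>_def by (rule sum_divide_distrib[symmetric])
    also have "\<dots> = 1" using Snz[of y] unfolding S_def by simp
    finally show ?thesis .
  qed
  have bound: "norm (F y - (\<Sum>c\<in>C. \<psi> c y *\<^sub>R c)) \<le> e" for y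
  proof -
    have "F y = (\<Sum>c\<in>C. \<psi> c y) *\<^sub>R F y" using sum1[of y] by simp
    also have "\<dots> = (\<Sum>c\<in>C. \<psi> c y *\<^sub>R F y)" by (rule scaleR_sum_left)
    finally have eqF: "F y - (\<Sum>c\<in>C. \<psi> c y *\<^sub>R c) = (\<Sum>c\<in>C. \<psi> c y *\<^sub>R (F y - c))"
      by (simp add: sum_subtractf scaleR_diff_right)
    have "norm (F y - (\<Sum>c\<in>C. \<psi> c y *\<^sub>R c)) \<le> (\<Sum>c\<in>C. norm (\<psi> c y *\<^sub>R (F y - c)))"
      unfolding eqF by (rule norm_sum)
    also have "\<dots> \<le> (\<Sum>c\<in>C. \<psi> c y * e)"
    proof (rule sum_mono)
      fix c assume c: "c \<in> C"
      have nn: "0 \<le> \<psi> c y" using rng[OF c] by simp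
      show "norm (\<psi> c y *\<^sub>R (F y - c)) \<le> \<psi> c y * e"
      proof (cases "dist (F y) c < e")
        case True
        then have "norm (F y - c) \<le> e" by (simp add: dist_norm)
        then show ?thesis using nn by (simp add: mult_left_mono)
      next
        case False
        then have "\<psi>' c y = 0" unfolding \<psi>'_def by simp
        then have "\<psi> c y = 0" unfolding \<psi>_def by simp
        then show ?thesis by simp
      qed
    qed
    also have "\<dots> = (\<Sum>c\<in>C. \<psi> c y) * e" by (rule sum_distrib_right[symmetric])
    also have "\<dots> = e" using sum1[of y] by simp
    finally show ?thesis .
  qed
  show ?thesis using C(2) cont rng bound by blast
qed

lemma intdiff:
  fixes f h :: "'x \<Rightarrow> 'd::{banach,second_countable_topology}"
  assumes fm: "finite_measure M" and f: "integrable M f" and h: "integrable M h"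
    and bd: "\<And>y. y \<in> space M \<Longrightarrow> norm (f y - h y) \<le> e"
  shows "norm (integral\<^sup>L M f - integral\<^sup>L M h) \<le> e * measure M (space M)"
proof -
  have "integral\<^sup>L M f - integral\<^sup>L M h = integral\<^sup>L M (\<lambda>y. f y - h y)" using f h by simp
  also have "norm \<dots> \<le> integral\<^sup>L M (\<lambda>y. norm (f y - h y))" by (rule integral_norm_bound)
  also have "\<dots> \<le> integral\<^sup>L M (\<lambda>y. e)"
    by (rule integral_mono) (use f h bd finite_measure.integrable_const[OF fm] in auto)
  also have "\<dots> = e * measure M (space M)" by simp
  finally show ?thesis .
qed

lemma four_comb:
  fixes w1 w2 z1 z2 a1 a2 b1 b2 :: "'v::real_normed_vector"
  assumes "norm (w1 - a1) \<le> d1" "norm (w2 - a2) \<le> d2" "norm (z1 - b1) \<le> d3" "norm (z2 - b2) \<le> d4"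
    and "a1 - a2 - b1 + b2 = 0"
  shows "norm ((w1 - w2) - (z1 - z2)) \<le> d1 + d2 + d3 + d4"
proof -
  have "(w1 - w2) - (z1 - z2) = ((w1 - a1) - (w2 - a2)) - ((z1 - b1) - (z2 - b2)) + (a1 - a2 - b1 + b2)"
    by (simp add: algebra_simps)
  then have eq: "(w1 - w2) - (z1 - z2) = ((w1 - a1) - (w2 - a2)) - ((z1 - b1) - (z2 - b2))"
    using assms(5) by simp
  have "norm (((w1 - a1) - (w2 - a2)) - ((z1 - b1) - (z2 - b2))) \<le> norm ((w1 - a1) - (w2 - a2)) + norm ((z1 - b1) - (z2 - b2))"
    by (rule norm_triangle_ineq4)
  also have "\<dots> \<le> (norm (w1 - a1) + norm (w2 - a2)) + (norm (z1 - b1) + norm (z2 - b2))"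
    by (intro add_mono norm_triangle_ineq4)
  finally have "norm ((w1 - w2) - (z1 - z2)) \<le> (norm (w1 - a1) + norm (w2 - a2)) + (norm (z1 - b1) + norm (z2 - b2))"
    unfolding eq .
  then show ?thesis using assms(1-4) by linarith
qed

lemma zero_eps:
  fixes x :: "'v::real_normed_vector"
  assumes T: "T \<ge> 0" and h: "\<And>e. e > 0 \<Longrightarrow> norm x \<le> e * T"
  shows "x = 0"
proof (rule ccontr)
  assume "x \<noteq> 0"
  then have nx: "norm x > 0" by simp
  define e where "e = norm x / (2 * (T + 1))"
  have e0: "e > 0" using nx T unfolding e_def by simp
  have "e * T < norm x"
  proof -
    have "e * T = norm x * (T / (2 * (T + 1)))" unfolding e_def by simp
    also have "T / (2 * (T + 1)) < 1" using T by (simp add: divide_less_eq)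
    then have "norm x * (T / (2 * (T + 1))) < norm x * 1" using nx by (intro mult_strict_left_mono) auto
    finally show ?thesis by simp
  qed
  then show False using h[OF e0] by simp
qed

lemma rkbs_bl:
  assumes R: "rkbs ev ev' p kern"
  shows "bounded_linear (p g)"
proof -
  have "\<exists>Mc. \<forall>g h. cmod (p g h) \<le> Mc * norm g * norm h" using R unfolding rkbs_def by blast
  then obtain Mc where Mc: "\<And>g h. cmod (p g h) \<le> Mc * norm g * norm h" by blast
  show ?thesis
  proof (rule bounded_linear_intro)
    show "p g (x + y) = p g x + p g y" for x y using R unfolding rkbs_def by blast
    show "p g (r *\<^sub>R x) = r *\<^sub>R p g x" for r x
    proof -
      have cf: "\<forall>r v. ev' (r *\<^sub>R v) = (\<lambda>x. complex_of_real r * ev' v x)"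
        using R unfolding rkbs_def complex_fun_space_def by (elim conjE) assumption
      have "ev' (r *\<^sub>R x) = (\<lambda>y. complex_of_real r * ev' x y)"
        using cf by simp
      then have "p g (r *\<^sub>R x) = complex_of_real r * p g x"
        using R unfolding rkbs_def by blast
      then show ?thesis by (simp add: scaleR_conv_of_real)
    qed
    show "norm (p g x) \<le> norm x * (Mc * norm g)" for x
      using Mc[of g x] by (simp add: mult.commute mult.left_commute)
  qed
qed

lemma rkbs_ev:
  assumes R: "rkbs ev ev' p kern"
  shows "ev g = (\<lambda>y. p g (kern y))"
  using R unfolding rkbs_def by auto

lemma Kbar_wd:
  fixes ev :: "'b::banach \<Rightarrow> 'a::topological_space \<Rightarrow> complex"
    and ev' :: "'c::banach \<Rightarrow> 'a \<Rightarrow> complex"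
    and p :: "'b \<Rightarrow> 'c \<Rightarrow> complex"
    and kern :: "'a \<Rightarrow> 'c"
  assumes X: "compact (UNIV :: 'a set)" and R: "rkbs ev ev' p kern" and U: "universal ev"
    and k: "continuous_on UNIV kern" and G: "continuous_on UNIV G"
    and M1: "fin_borel M1" and M2: "fin_borel M2" and N1: "fin_borel N1" and N2: "fin_borel N2"
    and kM1: "bochner_int M1 kern v1" and kM2: "bochner_int M2 kern v2"
    and kN1: "bochner_int N1 kern u1" and kN2: "bochner_int N2 kern u2"
    and eq: "v1 - v2 = u1 - u2"
    and GM1: "bochner_int M1 G w1" and GM2: "bochner_int M2 G w2"
    and GN1: "bochner_int N1 G z1" and GN2: "bochner_int N2 G z2"
  shows "w1 - w2 = z1 - z2"
proof -
  let ?I = "\<lambda>M (f::'a \<Rightarrow> complex). integral\<^sup>L M f"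
  have evc: "continuous_on UNIV (ev g)" for g using U unfolding universal_def by blast
  have pa: "?I M1 (ev g) - ?I M2 (ev g) - ?I N1 (ev g) + ?I N2 (ev g) = 0" for g
  proof -
    have bl: "bounded_linear (p g)" by (rule rkbs_bl[OF R])
    have "p g v = ?I M (ev g)" if "fin_borel M" "bochner_int M kern v" for M v
      using pairing_int[OF that(1) X k that(2) bl] rkbs_ev[OF R, of g] by simp
    then have e1: "p g v1 = ?I M1 (ev g)" "p g v2 = ?I M2 (ev g)" "p g u1 = ?I N1 (ev g)" "p g u2 = ?I N2 (ev g)"
      using M1 M2 N1 N2 kM1 kM2 kN1 kN2 by auto
    have "p g (v1 - v2) = p g (u1 - u2)" using eq by simp
    then have "p g v1 - p g v2 = p g u1 - p g u2"
      using linear_diff[OF bounded_linear.linear[OF bl]] by simp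
    then show ?thesis using e1 by simp
  qed
  let ?T = "measure M1 (space M1) + measure M2 (space M2) + measure N1 (space N1) + measure N2 (space N2)"
  have T0: "?T \<ge> 0" by simp
  have pb: "integral\<^sup>L M1 \<psi> - integral\<^sup>L M2 \<psi> - integral\<^sup>L N1 \<psi> + integral\<^sup>L N2 \<psi> = 0"
    if \<psi>: "continuous_on UNIV \<psi>" for \<psi> :: "'a \<Rightarrow> real"
  proof -
    define f where "f y = complex_of_real (\<psi> y)" for y
    have fc: "continuous_on UNIV f" unfolding f_def[abs_def] by (intro continuous_on_of_real \<psi>)
    have "?I M1 f - ?I M2 f - ?I N1 f + ?I N2 f = 0"
    proof (rule zero_eps[OF T0])
      fix e :: real assume e: "e > 0"
      obtain g where g: "\<And>y. cmod (ev g y - f y) < e" using U fc e unfolding universal_def by blast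
      have one: "norm (?I M f - ?I M (ev g)) \<le> e * measure M (space M)" if M: "fin_borel M" for M
      proof (rule intdiff[OF fin_borel_fm[OF M] integrable_fb[OF M X fc] integrable_fb[OF M X evc]])
        show "norm (f y - ev g y) \<le> e" for y using g[of y] by (simp add: norm_minus_commute)
      qed
      have z: "?I M1 (ev g) - ?I M2 (ev g) - ?I N1 (ev g) + ?I N2 (ev g) = 0" by (rule pa)
      have "norm ((?I M1 f - ?I M2 f) - (?I N1 f - ?I N2 f))
          \<le> e * measure M1 (space M1) + e * measure M2 (space M2) + e * measure N1 (space N1) + e * measure N2 (space N2)"
        by (rule four_comb[OF one[OF M1] one[OF M2] one[OF N1] one[OF N2]]) (use z in \<open>simp add: algebra_simps\<close>)
      then show "norm (?I M1 f - ?I M2 f - ?I N1 f + ?I N2 f) \<le> e * ?T"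
        by (simp add: algebra_simps)
    qed
    then have "complex_of_real (integral\<^sup>L M1 \<psi> - integral\<^sup>L M2 \<psi> - integral\<^sup>L N1 \<psi> + integral\<^sup>L N2 \<psi>) = 0"
      unfolding f_def by simp
    then show ?thesis by (simp only: of_real_eq_0_iff)
  qed
  show ?thesis
  proof (rule eq_iff_diff_eq_0[THEN iffD2], rule zero_eps[OF T0])
    fix e :: real assume e: "e > 0"
    obtain C \<psi> where C: "finite C" and \<psi>c: "\<And>c. c \<in> C \<Longrightarrow> continuous_on UNIV (\<psi> c)"
      and \<psi>r: "\<And>c y. c \<in> C \<Longrightarrow> 0 \<le> \<psi> c y \<and> \<psi> c y \<le> 1"
      and bd: "\<And>y. norm (G y - (\<Sum>c\<in>C. \<psi> c y *\<^sub>R c)) \<le> e"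
      using pou[OF X G e] by blast
    define \<Psi> where "\<Psi> y = (\<Sum>c\<in>C. \<psi> c y *\<^sub>R c)" for y
    have \<Psi>c: "continuous_on UNIV \<Psi>"
      unfolding \<Psi>_def[abs_def] by (intro continuous_on_sum continuous_on_scaleR \<psi>c continuous_on_const)
    have one: "norm (w - (\<Sum>c\<in>C. integral\<^sup>L M (\<psi> c) *\<^sub>R c)) \<le> e * measure M (space M)"
      if M: "fin_borel M" and w: "bochner_int M G w" for M w
    proof (rule bochner_int_err[OF fin_borel_fm[OF M] w _ cont_meas[OF M G] cont_meas[OF M \<Psi>c]])
      show "bochner_int M \<Psi> (\<Sum>c\<in>C. integral\<^sup>L M (\<psi> c) *\<^sub>R c)"
        unfolding \<Psi>_def[abs_def]
      proof (rule bochner_comb[OF fin_borel_fm[OF M] C, where B=1])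
        show "\<psi> c \<in> borel_measurable M" if "c \<in> C" for c by (rule cont_meas[OF M \<psi>c[OF that]])
        show "\<bar>\<psi> c y\<bar> \<le> 1" if "c \<in> C" for c y using \<psi>r[OF that, of y] by simp
      qed
      show "0 \<le> e" using e by simp
      show "\<forall>y\<in>space M. norm (G y - \<Psi> y) \<le> e" using bd unfolding \<Psi>_def by blast
    qed
    have comb: "(\<Sum>c\<in>C. integral\<^sup>L M1 (\<psi> c) *\<^sub>R c) - (\<Sum>c\<in>C. integral\<^sup>L M2 (\<psi> c) *\<^sub>R c)
       - (\<Sum>c\<in>C. integral\<^sup>L N1 (\<psi> c) *\<^sub>R c) + (\<Sum>c\<in>C. integral\<^sup>L N2 (\<psi> c) *\<^sub>R c) = 0"
    proof -
      have "(\<Sum>c\<in>C. integral\<^sup>L M1 (\<psi> c) *\<^sub>R c) - (\<Sum>c\<in>C. integral\<^sup>L M2 (\<psi> c) *\<^sub>R c)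
       - (\<Sum>c\<in>C. integral\<^sup>L N1 (\<psi> c) *\<^sub>R c) + (\<Sum>c\<in>C. integral\<^sup>L N2 (\<psi> c) *\<^sub>R c)
       = (\<Sum>c\<in>C. (integral\<^sup>L M1 (\<psi> c) - integral\<^sup>L M2 (\<psi> c) - integral\<^sup>L N1 (\<psi> c) + integral\<^sup>L N2 (\<psi> c)) *\<^sub>R c)"
        by (simp add: sum_subtractf sum.distrib scaleR_diff_left scaleR_add_left)
      also have "\<dots> = 0"
        by (rule sum.neutral) (use pb[OF \<psi>c] in simp)
      finally show ?thesis .
    qed
    have "norm ((w1 - w2) - (z1 - z2))
        \<le> e * measure M1 (space M1) + e * measure M2 (space M2) + e * measure N1 (space N1) + e * measure N2 (space N2)"
      by (rule four_comb[OF one[OF M1 GM1] one[OF M2 GM2] one[OF N1 GN1] one[OF N2 GN2] comb])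
    then show "norm (w1 - w2 - (z1 - z2)) \<le> e * ?T" by (simp add: algebra_simps)
  qed
qed

lemma ev_small: "eventually (\<lambda>t::real. 0 < t \<and> t < b) (at_right 0)" if "b > 0"
  unfolding eventually_at_right_field using that by blast

lemma avg_lim:
  fixes f :: "real \<Rightarrow> 'c::banach"
  assumes f: "continuous_on {a..a+1} f"
  shows "((\<lambda>t. (1/t) *\<^sub>R integral {a..a+t} f) \<longlongrightarrow> f a) (at_right 0)"
proof -
  define \<Phi> where "\<Phi> u = integral {a..u} f" for u
  have "(\<Phi> has_vector_derivative f a) (at a within {a..a+1})"
    unfolding \<Phi>_def by (rule integral_has_vector_derivative[OF f]) simp
  then have "(\<Phi> has_derivative (\<lambda>h. h *\<^sub>R f a)) (at a within {a..a+1})"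
    by (simp add: has_vector_derivative_def)
  then have lim: "((\<lambda>y. ((\<Phi> y - \<Phi> a) - (y - a) *\<^sub>R f a) /\<^sub>R norm (y - a)) \<longlongrightarrow> 0) (at a within {a..a+1})"
    by (simp add: has_derivative_at_within)
  have fl: "filterlim (\<lambda>t. a + t) (at a within {a..a+1}) (at_right 0)"
    unfolding filterlim_at
  proof
    show "\<forall>\<^sub>F t in at_right 0. a + t \<in> {a..a + 1} \<and> a + t \<noteq> a"
      by (rule eventually_mono[OF ev_small[of 1]]) auto
    have "((\<lambda>t. a + t) \<longlongrightarrow> a + 0) (at_right (0::real))"
      by (intro tendsto_add tendsto_const tendsto_ident_at)
    then show "((\<lambda>t. a + t) \<longlongrightarrow> a) (at_right 0)" by simp
  qed
  have lim2: "((\<lambda>t. ((\<Phi> (a + t) - \<Phi> a) - ((a + t) - a) *\<^sub>R f a) /\<^sub>R norm ((a + t) - a)) \<longlongrightarrow> 0) (at_right 0)"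
    using filterlim_compose[OF lim fl] by simp
  have "((\<lambda>t. (1/t) *\<^sub>R integral {a..a+t} f - f a) \<longlongrightarrow> 0) (at_right 0)"
  proof (rule Lim_transform_eventually[OF lim2])
    show "\<forall>\<^sub>F t in at_right 0. ((\<Phi> (a + t) - \<Phi> a) - ((a + t) - a) *\<^sub>R f a) /\<^sub>R norm ((a + t) - a)
        = (1/t) *\<^sub>R integral {a..a+t} f - f a"
    proof (rule eventually_mono[OF ev_small[of 1]])
      fix t :: real assume t: "0 < t \<and> t < 1"
      have "\<Phi> a = 0" unfolding \<Phi>_def by simp
      then show "((\<Phi> (a + t) - \<Phi> a) - ((a + t) - a) *\<^sub>R f a) /\<^sub>R norm ((a + t) - a)
        = (1/t) *\<^sub>R integral {a..a+t} f - f a"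
        using t unfolding \<Phi>_def by (simp add: scaleR_diff_right divide_inverse)
    qed simp
  qed
  then show ?thesis by (rule LIM_zero_cancel)
qed

lemma sbi_distr:
  fixes s :: "'y \<Rightarrow> 'c::banach"
  assumes T: "T \<in> measurable M N" and s: "simple_function (distr M N T) s"
  shows "simple_function M (\<lambda>x. s (T x))"
    and "Bochner_Integration.simple_bochner_integral (distr M N T) s =
         Bochner_Integration.simple_bochner_integral M (\<lambda>x. s (T x))"
proof -
  have sm: "s \<in> borel_measurable N"
  proof -
    have "s \<in> borel_measurable (distr M N T)" by (rule borel_measurable_simple_function[OF s])
    moreover have "measurable (distr M N T) borel = measurable N (borel :: 'c measure)"
      by (rule measurable_cong_sets) simp_all
    ultimately show ?thesis by simp
  qed
  have finN: "finite (s ` space N)" using simple_functionD(1)[OF s] by simp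
  have sub: "(\<lambda>x. s (T x)) ` space M \<subseteq> s ` space N" using measurable_space[OF T] by auto
  show sf: "simple_function M (\<lambda>x. s (T x))"
  proof (rule simple_function_borel_measurable)
    show "(\<lambda>x. s (T x)) \<in> borel_measurable M" using measurable_compose[OF T sm] by (simp add: o_def)
    show "finite ((\<lambda>x. s (T x)) ` space M)" by (rule finite_subset[OF sub finN])
  qed
  have meas_eq: "measure (distr M N T) {x\<in>space N. s x = y} = measure M {x\<in>space M. s (T x) = y}" for y
  proof -
    have "{x\<in>space N. s x = y} = s -` {y} \<inter> space N" by auto
    then have inN: "{x\<in>space N. s x = y} \<in> sets N" using measurable_sets[OF sm, of "{y}"] by simp
    have "measure (distr M N T) {x\<in>space N. s x = y} = measure M (T -` {x\<in>space N. s x = y} \<inter> space M)"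
      by (rule measure_distr[OF T inN])
    also have "T -` {x\<in>space N. s x = y} \<inter> space M = {x\<in>space M. s (T x) = y}"
      using measurable_space[OF T] by auto
    finally show ?thesis .
  qed
  have "Bochner_Integration.simple_bochner_integral (distr M N T) s
      = (\<Sum>y\<in>s ` space N. measure M {x\<in>space M. s (T x) = y} *\<^sub>R y)"
    unfolding simple_bochner_integral_def using meas_eq by simp
  also have "\<dots> = (\<Sum>y\<in>(\<lambda>x. s (T x)) ` space M. measure M {x\<in>space M. s (T x) = y} *\<^sub>R y)"
  proof (rule sum.mono_neutral_right[OF finN sub])
    show "\<forall>y\<in>s ` space N - (\<lambda>x. s (T x)) ` space M. measure M {x\<in>space M. s (T x) = y} *\<^sub>R y = 0"
    proof
      fix y assume "y \<in> s ` space N - (\<lambda>x. s (T x)) ` space M"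
      then have "y \<notin> (\<lambda>x. s (T x)) ` space M" by blast
      then have e: "{x\<in>space M. s (T x) = y} = {}" by (auto simp: image_iff)
      show "measure M {x\<in>space M. s (T x) = y} *\<^sub>R y = 0" unfolding e by simp
    qed
  qed
  also have "\<dots> = Bochner_Integration.simple_bochner_integral M (\<lambda>x. s (T x))"
    unfolding simple_bochner_integral_def by simp
  finally show "Bochner_Integration.simple_bochner_integral (distr M N T) s =
         Bochner_Integration.simple_bochner_integral M (\<lambda>x. s (T x))" .
qed

lemma distr_int:
  fixes F :: "'a::topological_space \<Rightarrow> 'c::banach" and \<gamma> :: "real \<Rightarrow> 'a"
  assumes X: "compact (UNIV :: 'a set)" and F: "continuous_on UNIV F"
    and \<gamma>: "continuous_on {0..T} \<gamma>" and T: "0 \<le> T"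
  shows "fin_borel (distr (restrict_space lborel {0..T}) borel \<gamma>)"
    and "bochner_int (distr (restrict_space lborel {0..T}) borel \<gamma>) F (integral {0..T} (\<lambda>s. F (\<gamma> s)))"
proof -
  let ?R = "restrict_space lborel {0..T}"
  let ?\<mu> = "distr ?R borel \<gamma>"
  have \<gamma>m: "\<gamma> \<in> measurable ?R borel" by (rule meas_R[OF \<gamma>])
  show fb: "fin_borel ?\<mu>"
    unfolding fin_borel_def using finite_measure.finite_measure_distr[OF finite_R \<gamma>m] by simp
  obtain s where sall: "\<forall>n. Bochner_Integration.simple_bochner_integrable ?\<mu> (s n) \<and>
     (\<forall>y. norm (F y - s n y) \<le> 1 / real (Suc n))"
    using approx_fb[OF fb X F] by blast
  have s: "\<And>n. Bochner_Integration.simple_bochner_integrable ?\<mu> (s n)" using sall by blast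
  have bd: "\<And>n y. norm (F y - s n y) \<le> 1 / real (Suc n)" using sall by blast
  have Fg: "continuous_on {0..T} (\<lambda>s. F (\<gamma> s))"
    by (rule continuous_on_compose2[OF F \<gamma>]) simp
  have lim: "(\<lambda>n. Bochner_Integration.simple_bochner_integral ?R (\<lambda>x. s n (\<gamma> x))) \<longlonglongrightarrow> integral {0..T} (\<lambda>s. F (\<gamma> s))"
  proof (rule sbi_R_limit[OF T Fg])
    show "simple_function ?R (\<lambda>x. s n (\<gamma> x))" for n
      by (rule sbi_distr(1)[OF \<gamma>m sbi_measurable[OF s]])
    show "norm (F (\<gamma> y) - s n (\<gamma> y)) \<le> 1 / real (Suc n)" for n y by (rule bd)
  qed
  have eq: "Bochner_Integration.simple_bochner_integral ?\<mu> (s n) = Bochner_Integration.simple_bochner_integral ?R (\<lambda>x. s n (\<gamma> x))" for n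
    by (rule sbi_distr(2)[OF \<gamma>m sbi_measurable[OF s]])
  show "bochner_int ?\<mu> F (integral {0..T} (\<lambda>s. F (\<gamma> s)))"
  proof (rule unif_bochner[OF fin_borel_fm[OF fb] s _ inv_Suc_lim])
    show "norm (F y - s n y) \<le> 1 / real (Suc n)" for n y by (rule bd)
    show "(\<lambda>n. Bochner_Integration.simple_bochner_integral ?\<mu> (s n)) \<longlonglongrightarrow> integral {0..T} (\<lambda>s. F (\<gamma> s))"
      using lim eq by simp
  qed
qed

lemma null_fb: "fin_borel (null_measure borel)"
  unfolding fin_borel_def by (auto intro!: finite_measureI)

lemma null_int: "bochner_int (null_measure borel) F 0"
  unfolding bochner_int_def
proof (rule exI[of _ "\<lambda>_ _. 0"], intro conjI allI)
  show "AE y in null_measure borel. (\<lambda>i. 0) \<longlonglongrightarrow> F y"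
    by (rule AE_I[where N=UNIV]) auto
qed (simp_all add: sbi_zero sbi_zero_val)

theorem proposition3:
  fixes ev :: "'b::banach \<Rightarrow> 'a::topological_space \<Rightarrow> complex"
    and ev' :: "'c::banach \<Rightarrow> 'a \<Rightarrow> complex"
    and p :: "'b \<Rightarrow> 'c \<Rightarrow> complex"
    and kern :: "'a \<Rightarrow> 'c"
    and \<phi> :: "real \<Rightarrow> 'a \<Rightarrow> 'a"
  assumes "compact (UNIV :: 'a set)"
    and "rkbs ev ev' p kern"
    and "kernel_lin_indep ev' kern"
    and "universal ev"
    and "continuous_on UNIV kern"
    and "semiflow \<phi>"
    and "continuous_on ({0..} \<times> UNIV) (\<lambda>(t, x). \<phi> t x)"
  shows "(\<forall>T>0. \<forall>x. bprime kern \<phi> T x \<in> domC kern \<phi>) \<and> densely_defined p (domC kern \<phi>)"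
proof -
  note X = assms(1) and R = assms(2) and U = assms(4) and k = assms(5) and sf = assms(6) and jc = assms(7)
  have phit: "continuous_on UNIV (\<phi> t)" if t: "t \<ge> 0" for t
  proof -
    have "continuous_on UNIV (\<lambda>x. (\<lambda>(t, x). \<phi> t x) (t, x))"
      by (rule continuous_on_compose2[OF jc]) (use t in \<open>auto intro!: continuous_intros\<close>)
    then show ?thesis by simp
  qed
  have phix: "continuous_on {0..T} (\<lambda>s. \<phi> s x)" for T x
  proof -
    have "continuous_on {0..T} (\<lambda>s. (\<lambda>(t, x). \<phi> t x) (s, x))"
      by (rule continuous_on_compose2[OF jc]) (auto intro!: continuous_intros)
    then show ?thesis by simp
  qed
  have phi0: "\<phi> 0 y = y" for y using sf unfolding semiflow_def by simp
  have phiadd: "\<phi> t (\<phi> s y) = \<phi> (t + s) y" if "t \<ge> 0" "s \<ge> 0" for t s y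
    using sf that unfolding semiflow_def by simp
  have kphi: "continuous_on {0..T} (\<lambda>s. kern (\<phi> s x))" for T x
    by (rule continuous_on_compose2[OF k phix]) simp
  have bp: "bprime kern \<phi> T x = integral {0..T} (\<lambda>s. kern (\<phi> s x))" if T: "T \<ge> 0" for T x
    unfolding bprime_def
  proof (rule the_equality)
    show "bochner_int (restrict_space lborel {0..T}) (\<lambda>s. kern (\<phi> s x)) (integral {0..T} (\<lambda>s. kern (\<phi> s x)))"
      by (rule bochner_R[OF T kphi])
    fix v assume v: "bochner_int (restrict_space lborel {0..T}) (\<lambda>s. kern (\<phi> s x)) v"
    have "norm (v - integral {0..T} (\<lambda>s. kern (\<phi> s x))) \<le> 0 * measure (restrict_space lborel {0..T}) (space (restrict_space lborel {0..T}))"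
      by (rule bochner_int_err[OF finite_R v bochner_R[OF T kphi] meas_R[OF kphi] meas_R[OF kphi]]) simp_all
    then show "v = integral {0..T} (\<lambda>s. kern (\<phi> s x))" by simp
  qed
  have inDom: "bprime kern \<phi> T x \<in> Dom kern" if T: "T \<ge> 0" for T x
    unfolding Dom_def
    using distr_int[OF X k phix T] null_fb null_int bp[OF T] by fastforce
  have Kb: "Kbar kern \<phi> t (bprime kern \<phi> T x) = integral {0..T} (\<lambda>s. kern (\<phi> (t + s) x))"
    if T: "T \<ge> 0" and t: "t \<ge> 0" for T x t
  proof -
    let ?\<mu> = "distr (restrict_space lborel {0..T}) borel (\<lambda>s. \<phi> s x)"
    let ?\<nu> = "null_measure (borel :: 'a measure)"
    let ?b = "bprime kern \<phi> T x"
    have Gc: "continuous_on UNIV (\<lambda>y. kern (\<phi> t y))"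
      by (rule continuous_on_compose2[OF k phit[OF t]]) simp
    have fbm: "fin_borel ?\<mu>" by (rule distr_int(1)[OF X k phix T])
    have bm: "bochner_int ?\<mu> kern ?b" using distr_int(2)[OF X k phix T] bp[OF T] by simp
    have wm: "bochner_int ?\<mu> (\<lambda>y. kern (\<phi> t y)) (integral {0..T} (\<lambda>s. kern (\<phi> t (\<phi> s x))))"
      by (rule distr_int(2)[OF X Gc phix T])
    have "Kbar kern \<phi> t ?b = integral {0..T} (\<lambda>s. kern (\<phi> t (\<phi> s x))) - 0"
      unfolding Kbar_def
    proof (rule the_equality)
      show "\<exists>M1 M2 v1 v2 w1 w2. fin_borel M1 \<and> fin_borel M2 \<and> bochner_int M1 kern v1 \<and> bochner_int M2 kern v2 \<and>
          ?b = v1 - v2 \<and> bochner_int M1 (\<lambda>y. kern (\<phi> t y)) w1 \<and> bochner_int M2 (\<lambda>y. kern (\<phi> t y)) w2 \<and>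
          integral {0..T} (\<lambda>s. kern (\<phi> t (\<phi> s x))) - 0 = w1 - w2"
        by (rule exI[of _ ?\<mu>], rule exI[of _ ?\<nu>], rule exI[of _ ?b], rule exI[of _ 0],
            rule exI[of _ "integral {0..T} (\<lambda>s. kern (\<phi> t (\<phi> s x)))"], rule exI[of _ 0])
           (simp add: fbm null_fb bm null_int wm)
      fix h assume "\<exists>M1 M2 v1 v2 w1 w2. fin_borel M1 \<and> fin_borel M2 \<and> bochner_int M1 kern v1 \<and> bochner_int M2 kern v2 \<and>
          ?b = v1 - v2 \<and> bochner_int M1 (\<lambda>y. kern (\<phi> t y)) w1 \<and> bochner_int M2 (\<lambda>y. kern (\<phi> t y)) w2 \<and>
          h = w1 - w2"
      then obtain M1 M2 v1 v2 w1 w2 where M1: "fin_borel M1" and M2: "fin_borel M2"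
        and k1: "bochner_int M1 kern v1" and k2: "bochner_int M2 kern v2" and beq: "?b = v1 - v2"
        and w1: "bochner_int M1 (\<lambda>y. kern (\<phi> t y)) w1" and w2: "bochner_int M2 (\<lambda>y. kern (\<phi> t y)) w2"
        and h: "h = w1 - w2" by blast
      have "w1 - w2 = integral {0..T} (\<lambda>s. kern (\<phi> t (\<phi> s x))) - 0"
        by (rule Kbar_wd[OF X R U k Gc M1 M2 fbm null_fb k1 k2 bm null_int _ w1 w2 wm null_int])
           (use beq in simp)
      then show "h = integral {0..T} (\<lambda>s. kern (\<phi> t (\<phi> s x))) - 0" using h by simp
    qed
    also have "\<dots> = integral {0..T} (\<lambda>s. kern (\<phi> (t + s) x))"
      by (simp, rule integral_cong) (use phiadd[OF t] in simp)
    finally show ?thesis .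
  qed
  have part1: "\<forall>T>0. \<forall>x. bprime kern \<phi> T x \<in> domC kern \<phi>"
  proof (intro allI impI)
    fix T :: real and x assume T0: "T > 0"
    define f where "f s = kern (\<phi> s x)" for s
    let ?b = "bprime kern \<phi> T x"
    have fc2: "continuous_on {0..2*T} f" unfolding f_def by (rule kphi)
    have fcT: "continuous_on {T..T+1} f" unfolding f_def by (rule continuous_on_subset[OF kphi[of "T+1" x]]) (use T0 in auto)
    have fc0: "continuous_on {0..0+1} f" unfolding f_def by (rule continuous_on_subset[OF kphi[of "1" x]]) auto
    have bpv: "?b = integral {0..T} f" unfolding f_def using bp T0 by simp
    have ev_eq: "\<forall>\<^sub>F t in at_right 0. (1/t) *\<^sub>R integral {T..T+t} f - (1/t) *\<^sub>R integral {0..0+t} f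
        = (1 / t) *\<^sub>R (Kbar kern \<phi> t ?b - ?b)"
    proof (rule eventually_mono[OF ev_small[OF T0]])
      fix t :: real assume t: "0 < t \<and> t < T"
      have "Kbar kern \<phi> t ?b = integral {0..T} (\<lambda>s. f (t + s))"
        unfolding f_def using Kb[of T t x] T0 t by simp
      also have "\<dots> = integral {0..T} (f \<circ> (+) t)" by (simp add: o_def)
      also have "\<dots> = integral {t..T+t} f" using integral_shift_Icc_real[of 0 T f t] by simp
      finally have K: "Kbar kern \<phi> t ?b = integral {t..T+t} f" .
      have int: "f integrable_on {0..T+t}"
        by (rule integrable_continuous_interval[OF continuous_on_subset[OF fc2]]) (use t in auto)
      have c1: "integral {0..t} f + integral {t..T+t} f = integral {0..T+t} f"
        by (rule Henstock_Kurzweil_Integration.integral_combine[OF _ _ int]) (use t in auto)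
      have c2: "integral {0..T} f + integral {T..T+t} f = integral {0..T+t} f"
        by (rule Henstock_Kurzweil_Integration.integral_combine[OF _ _ int]) (use t in auto)
      have "Kbar kern \<phi> t ?b - ?b = integral {T..T+t} f - integral {0..t} f"
        using K bpv c1 c2 by (simp add: algebra_simps)
      then show "(1/t) *\<^sub>R integral {T..T+t} f - (1/t) *\<^sub>R integral {0..0+t} f
        = (1 / t) *\<^sub>R (Kbar kern \<phi> t ?b - ?b)" by (simp add: scaleR_diff_right)
    qed
    have "((\<lambda>t. (1/t) *\<^sub>R integral {T..T+t} f - (1/t) *\<^sub>R integral {0..0+t} f) \<longlongrightarrow> f T - f 0) (at_right 0)"
      by (intro tendsto_diff avg_lim fcT fc0)
    then have "((\<lambda>t. (1 / t) *\<^sub>R (Kbar kern \<phi> t ?b - ?b)) \<longlongrightarrow> f T - f 0) (at_right 0)"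
      by (rule Lim_transform_eventually[OF _ ev_eq])
    then show "?b \<in> domC kern \<phi>"
      unfolding domC_def using inDom[of T x] T0 by auto
  qed
  have part2: "densely_defined p (domC kern \<phi>)"
    unfolding densely_defined_def
  proof (intro allI impI)
    fix g assume H: "\<forall>h\<in>domC kern \<phi>. p g h = 0"
    have bl: "bounded_linear (p g)" by (rule rkbs_bl[OF R])
    have evc: "continuous_on UNIV (ev g)" using U unfolding universal_def by blast
    have evz: "ev g x = 0" for x
    proof -
      define e where "e s = ev g (\<phi> s x)" for s
      have ec: "continuous_on {0..T} e" for T
        unfolding e_def by (rule continuous_on_compose2[OF evc phix]) simp
      have ipos: "integral {0..T} e = 0" if T0: "T > 0" for T
      proof -
        have "bprime kern \<phi> T x \<in> domC kern \<phi>" using part1 T0 by blast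
        then have "p g (bprime kern \<phi> T x) = 0" using H by blast
        then have "p g (integral {0..T} (\<lambda>s. kern (\<phi> s x))) = 0" using bp T0 by simp
        moreover have "integral {0..T} (p g \<circ> (\<lambda>s. kern (\<phi> s x))) = p g (integral {0..T} (\<lambda>s. kern (\<phi> s x)))"
          by (rule integral_linear[OF integrable_continuous_interval[OF kphi] bl])
        moreover have "p g \<circ> (\<lambda>s. kern (\<phi> s x)) = e"
          unfolding e_def using rkbs_ev[OF R, of g] by (simp add: o_def)
        ultimately show ?thesis by simp
      qed
      have l1: "((\<lambda>t. (1/t) *\<^sub>R integral {0..0+t} e) \<longlongrightarrow> e 0) (at_right 0)"
        by (rule avg_lim) (use ec in simp)
      have "\<forall>\<^sub>F t in at_right 0. (0::complex) = (1/t) *\<^sub>R integral {0..0+t} e"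
        by (rule eventually_mono[OF ev_small[of 1]]) (simp_all add: ipos)
      then have l2: "((\<lambda>t. (1/t) *\<^sub>R integral {0..0+t} e) \<longlongrightarrow> 0) (at_right 0)"
        by (rule Lim_transform_eventually[OF tendsto_const])
      have "e 0 = 0" using tendsto_unique[OF trivial_limit_at_right_real l1 l2] .
      then show ?thesis unfolding e_def using phi0 by simp
    qed
    have ev0: "ev 0 = (\<lambda>x. 0)"
    proof -
      have cf: "\<forall>v w. ev (v + w) = (\<lambda>x. ev v x + ev w x)"
        using R unfolding rkbs_def complex_fun_space_def by (elim conjE) assumption
      have "ev (0 + 0) = (\<lambda>x. ev 0 x + ev 0 x)" using cf by blast
      then have "ev 0 x = ev 0 x + ev 0 x" for x by (metis add_0)
      then show ?thesis by auto
    qed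
    have "inj ev" using R unfolding rkbs_def complex_fun_space_def by blast
    moreover have "ev g = ev 0" using evz ev0 by auto
    ultimately show "g = 0" by (rule injD)
  qed
  show ?thesis using part1 part2 by blast
qed

end
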